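(* Let $\theta$ be uniformly distributed on $[0,2\pi)$. Let $C$ be a twice-differentiable plane curve parameterized by arc length at unit speed by $\gamma:[0,L(C)]\to\mathbb{R}^2$, such that $[0,L(C)]$ can be covered up to a set of measure zero by a countable set of open intervals none of which contains an inflection point. Mark every $y\in[0,L(C)]$ such that $\alpha(\gamma(y))=\theta$ and such that for every $\epsilon>0$ there exists $0<\delta<\epsilon$ with $\alpha(\gamma(y-\delta))\neq\theta$. Let $\ell$ be the number of marked points. Then $E[\ell]=A(C)/(2\pi)$.
   Context: For a point $x$ on $C$, $\alpha(x)\in[0,2\pi)$ is the angle between the (oriented) tangent to $C$ at $x$ and the $x$-axis. $L(C)$ is the length of $C$, $\kappa$ its curvature, and $A(C)=\int_0^{L(C)}|\kappa(y)|\,dy$ its total absolute curvature. *)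

theory Defs
  imports "HOL-Analysis.Analysis"
begin

text \<open>The plane is modelled as the complex numbers.  The angle in [0, 2pi) between
  a (nonzero) vector v and the x-axis.\<close>
definition tangent_angle :: "complex \<Rightarrow> real" where
  "tangent_angle v = (if Arg v < 0 then Arg v + 2 * pi else Arg v)"

text \<open>Signed curvature of a unit-speed curve with first derivative g' and second
  derivative g'': kappa = det(g', g'').\<close>
definition signed_curv :: "(real \<Rightarrow> complex) \<Rightarrow> (real \<Rightarrow> complex) \<Rightarrow> real \<Rightarrow> real" where
  "signed_curv g' g'' t = Im (cnj (g' t) * g'' t)"

definition inflection_point :: "(real \<Rightarrow> real) \<Rightarrow> real \<Rightarrow> real \<Rightarrow> bool" where
  "inflection_point k L y \<longleftrightarrow>
     (\<forall>\<epsilon>>0. \<exists>s\<in>{0..L}. \<exists>t\<in>{0..L}. \<bar>s - y\<bar> < \<epsilon> \<and> \<bar>t - y\<bar> < \<epsilon> \<and> k s > 0 \<and> k t < 0)"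

text \<open>Marked parameters for direction theta (points to the left of the parameter
  interval impose no constraint).\<close>
definition marked :: "(real \<Rightarrow> real) \<Rightarrow> real \<Rightarrow> real \<Rightarrow> real set" where
  "marked \<alpha> L \<theta> = {y \<in> {0..L}. \<alpha> y = \<theta> \<and>
     (\<forall>\<epsilon>>0. \<exists>\<delta>. 0 < \<delta> \<and> \<delta> < \<epsilon> \<and> (y - \<delta> \<notin> {0..L} \<or> \<alpha> (y - \<delta>) \<noteq> \<theta>))}"

end

theory Submission
  imports Defs
begin

lemma deriv_indicator_measurable:
  fixes f f' :: "real \<Rightarrow> real"
  assumes U: "open U" and der: "\<And>x. x \<in> U \<Longrightarrow> (f has_real_derivative f' x) (at x)"
  shows "(\<lambda>x. indicator U x * f' x) \<in> borel_measurable borel"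
proof -
  define V where "V n = U \<inter> (\<lambda>x. x + 1 / real (Suc n)) -` U" for n
  define F where "F n x = indicator (V n) x *\<^sub>R (real (Suc n) * (f (x + 1 / real (Suc n)) - f x))" for n x
  have contf: "continuous_on U f"
    using der by (meson DERIV_isCont continuous_at_imp_continuous_on)
  have openV: "open (V n)" for n
    unfolding V_def
    by (intro open_Int U open_vimage continuous_intros) 
  have meas: "F n \<in> borel_measurable borel" for n
    unfolding F_def
  proof (rule borel_measurable_continuous_on_indicator)
    show "V n \<in> sets borel" using openV by auto
    have c1: "continuous_on (V n) (\<lambda>x. f (x + 1 / real (Suc n)))"
      by (rule continuous_on_compose2[OF contf]) (auto intro!: continuous_intros simp: V_def)
    have c2: "continuous_on (V n) f"
      by (rule continuous_on_subset[OF contf]) (auto simp: V_def)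
    show "continuous_on (V n) (\<lambda>x. real (Suc n) * (f (x + 1 / real (Suc n)) - f x))"
      by (intro continuous_intros c1 c2)
  qed
  have lim: "(\<lambda>n. F n x) \<longlonglongrightarrow> indicator U x * f' x" for x
  proof (cases "x \<in> U")
    case False
    then have "F n x = 0" for n by (simp add: F_def V_def)
    then show ?thesis using False by simp
  next
    case True
    obtain e where e: "e > 0" "ball x e \<subseteq> U" using U True open_contains_ball by blast
    have ev: "eventually (\<lambda>n. x + 1 / real (Suc n) \<in> U) sequentially"
    proof -
      obtain N where N: "1 / real (Suc N) < e"
        using e(1) by (metis nat_approx_posE)
      have "x + 1 / real (Suc n) \<in> U" if "n \<ge> N" for n
      proof -
        have "1 / real (Suc n) \<le> 1 / real (Suc N)" using that by (simp add: frac_le)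
        then show ?thesis using e N by (intro subsetD[OF e(2)]) (simp add: dist_real_def)
      qed
      then show ?thesis by (auto simp: eventually_sequentially)
    qed
    have lim0: "(\<lambda>h. (f (x + h) - f x) / h) \<midarrow>0\<rightarrow> f' x"
      using der[OF True] by (simp add: DERIV_def)
    have seq: "(\<lambda>n. 1 / real (Suc n)) \<longlonglongrightarrow> 0" by (rule LIMSEQ_Suc[OF lim_inverse_n'])
    have "filterlim (\<lambda>n. 1 / real (Suc n)) (at 0) sequentially"
      using seq by (intro filterlim_atI) auto
    from filterlim_compose[OF lim0 this]
    have "(\<lambda>n. (f (x + 1 / real (Suc n)) - f x) / (1 / real (Suc n))) \<longlonglongrightarrow> f' x" by simp
    then have "(\<lambda>n. real (Suc n) * (f (x + 1 / real (Suc n)) - f x)) \<longlonglongrightarrow> f' x"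
      by (simp add: field_simps)
    moreover have "eventually (\<lambda>n. real (Suc n) * (f (x + 1 / real (Suc n)) - f x) = F n x) sequentially"
      using ev by eventually_elim (simp add: F_def V_def True)
    ultimately have "(\<lambda>n. F n x) \<longlonglongrightarrow> f' x" by (rule Lim_transform_eventually)
    then show ?thesis using True by simp
  qed
  show ?thesis
    by (rule borel_measurable_LIMSEQ_real[where u=F, OF lim meas])
qed

lemma sard_1d:
  fixes f :: "real \<Rightarrow> real"
  assumes der: "\<And>x. x \<in> S \<Longrightarrow> (f has_real_derivative 0) (at x within S)"
  shows "negligible (f ` S)"
proof -
  let ?F = "\<lambda>x::real^1. vec (f (x$1)) :: real^1"
  have d: "(?F has_derivative (*\<^sub>R) 0) (at x within vec ` S)" if x: "x \<in> vec ` S" for x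
  proof -
    obtain a where a: "a \<in> S" "x = vec a" using x by blast
    have "(f has_derivative (\<lambda>x. x * 0)) (at a within S)"
      using der[OF a(1)] by (simp add: has_field_derivative_def lambda_zero)
    from has_derivative_vector_1[OF this] show ?thesis using a by simp
  qed
  have "negligible (?F ` (vec ` S))"
  proof (rule baby_Sard[where f' = "\<lambda>x. (*\<^sub>R) 0"])
    show "CARD(1) \<le> CARD(1)" by simp
    show "(?F has_derivative (*\<^sub>R) 0) (at x within vec ` S)" if "x \<in> vec ` S" for x
      using d that .
    show "rank (matrix ((*\<^sub>R) (0::real) :: real^1 \<Rightarrow> real^1)) < CARD(1)" for x
    proof -
      have "((*\<^sub>R) (0::real) :: real^1 \<Rightarrow> real^1) = (\<lambda>h. 0)" by auto
      moreover have "(\<chi> i j. (0::real)) = (0::real^1^1)" by (simp add: vec_eq_iff)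
      ultimately show ?thesis by (simp add: matrix_def rank_0)
    qed
  qed
  moreover have "?F ` (vec ` S) = vec ` (f ` S)" by (auto simp: image_image)
  ultimately have n: "negligible (vec ` (f ` S) :: (real^1) set)" by simp
  have "negligible ((\<lambda>x::real^1. x$1) ` (vec ` (f ` S)))"
  proof (rule negligible_differentiable_image_negligible[OF _ n])
    show "DIM(real^1) \<le> DIM(real)" by simp
    show "(\<lambda>x::real^1. x$1) differentiable_on vec ` f ` S"
      by (simp add: bounded_linear_imp_differentiable_on bounded_linear_vec_nth)
  qed
  then show ?thesis by (simp add: image_image)
qed

lemma borel_to_lebesgue:
  fixes g :: "real \<Rightarrow> real"
  assumes "g \<in> borel_measurable borel"
  shows "g \<in> borel_measurable lebesgue"
  using assms by (simp add: measurable_completion)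

lemma cov_piece:
  fixes f f' :: "real \<Rightarrow> real"
  assumes E: "E \<in> sets borel" "bounded E"
    and der: "\<And>x. x \<in> E \<Longrightarrow> (f has_real_derivative f' x) (at x within E)"
    and inj: "inj_on f E"
    and bnd: "\<And>x. x \<in> E \<Longrightarrow> \<bar>f' x\<bar> \<le> B"
    and meas: "(\<lambda>x. indicator E x * f' x) \<in> borel_measurable borel"
  shows "f ` E \<in> sets lebesgue \<and>
         emeasure lebesgue (f ` E) = (\<integral>\<^sup>+ x. ennreal \<bar>f' x\<bar> * indicator E x \<partial>lborel)"
proof -
  have El: "E \<in> sets lebesgue" using E(1) by simp
  have Elm: "E \<in> lmeasurable" by (rule bounded_set_imp_lmeasurable[OF E(2) El])
  have m1: "(\<lambda>x. if x \<in> E then \<bar>f' x\<bar> else 0) \<in> borel_measurable lebesgue"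
  proof -
    have "(\<lambda>x. \<bar>indicator E x * f' x\<bar>) \<in> borel_measurable borel" using meas by measurable
    then have "(\<lambda>x. \<bar>indicator E x * f' x\<bar>) \<in> borel_measurable lebesgue" by (rule borel_to_lebesgue)
    moreover have "(\<lambda>x. \<bar>indicator E x * f' x\<bar>) = (\<lambda>x. if x \<in> E then \<bar>f' x\<bar> else 0)"
      by (auto simp: indicator_def)
    ultimately show ?thesis by simp
  qed
  then have m2: "(\<lambda>x. \<bar>f' x\<bar>) \<in> borel_measurable (lebesgue_on E)"
    using borel_measurable_if[OF El] by blast
  have ai: "(\<lambda>x. \<bar>f' x\<bar>) absolutely_integrable_on E"
    by (rule measurable_bounded_by_integrable_imp_absolutely_integrable[OF m2 El integrable_on_const[OF Elm, of B]])
       (use bnd in auto)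
  define b where "b = integral E (\<lambda>x. \<bar>f' x\<bar>)"
  have cov: "(\<lambda>x. \<bar>f' x\<bar> * 1) absolutely_integrable_on E \<and> integral E (\<lambda>x. \<bar>f' x\<bar> * 1) = b
      \<longleftrightarrow> (\<lambda>x. 1::real) absolutely_integrable_on (f ` E) \<and> integral (f ` E) (\<lambda>x. 1::real) = b"
    by (rule has_absolute_integral_change_of_variables_1'[OF El der inj])
  then have c1: "(\<lambda>x. 1::real) absolutely_integrable_on (f ` E)" and c2: "integral (f ` E) (\<lambda>x. 1::real) = b"
    using ai by (auto simp: b_def)
  have fE: "f ` E \<in> lmeasurable"
    using c1 by (simp add: lmeasurable_iff_integrable_on set_lebesgue_integral_eq_integral(1))
  have "emeasure lebesgue (f ` E) = ennreal (measure lebesgue (f ` E))"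
    using fE by (simp add: emeasure_eq_measure2)
  also have "\<dots> = ennreal b" using lmeasure_integral[OF fE] c2 by simp
  also have "\<dots> = (\<integral>\<^sup>+ x. ennreal \<bar>f' x\<bar> * indicator E x \<partial>lborel)"
  proof -
    have "((\<lambda>x. \<bar>f' x\<bar>) has_integral b) E"
      using ai unfolding b_def by (simp add: set_lebesgue_integral_eq_integral(1) integrable_integral)
    from nn_integral_has_integral_lebesgue'[OF _ this] show ?thesis by simp
  qed
  finally show ?thesis using fE by auto
qed

lemma closed_monoset:
  fixes f :: "real \<Rightarrow> real"
  assumes U: "open U" and contf: "continuous_on U f" and r: "r > 0"
  shows "closed {x \<in> U. ball x r \<subseteq> U \<and> (\<forall>y\<in>ball x r. s * ((f y - f x) * (y - x)) \<ge> 0)}"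
  unfolding closed_sequential_limits
proof (intro allI impI, elim conjE)
  fix xs :: "nat \<Rightarrow> real" and l
  assume mem: "\<forall>n. xs n \<in> {x \<in> U. ball x r \<subseteq> U \<and> (\<forall>y\<in>ball x r. s * ((f y - f x) * (y - x)) \<ge> 0)}"
    and lim: "xs \<longlonglongrightarrow> l"
  have evball: "eventually (\<lambda>n. y \<in> ball (xs n) r) sequentially" if y: "y \<in> ball l r" for y
  proof -
    have "(\<lambda>n. dist y (xs n)) \<longlonglongrightarrow> dist y l" by (intro tendsto_intros lim)
    moreover have "dist y l < r" using y by (simp add: dist_commute)
    ultimately have "eventually (\<lambda>n. dist y (xs n) < r) sequentially"
      by (rule order_tendstoD)
    then show ?thesis by (simp add: dist_commute)
  qed
  have ballU: "ball l r \<subseteq> U"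
  proof
    fix y assume y: "y \<in> ball l r"
    from eventually_happens'[OF _ evball[OF y]] obtain n where "y \<in> ball (xs n) r" by auto
    then show "y \<in> U" using mem by blast
  qed
  have lU: "l \<in> U" using ballU r by auto
  have fl: "(\<lambda>n. f (xs n)) \<longlonglongrightarrow> f l"
    using contf lU U lim by (metis continuous_on_eq_continuous_at isCont_tendsto_compose)
  have "s * ((f y - f l) * (y - l)) \<ge> 0" if y: "y \<in> ball l r" for y
  proof (rule tendsto_lowerbound)
    show "(\<lambda>n. s * ((f y - f (xs n)) * (y - xs n))) \<longlonglongrightarrow> s * ((f y - f l) * (y - l))"
      by (intro tendsto_intros fl lim)
    show "eventually (\<lambda>n. 0 \<le> s * ((f y - f (xs n)) * (y - xs n))) sequentially"
      using evball[OF y] by eventually_elim (use mem in blast)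
  qed simp
  then show "l \<in> {x \<in> U. ball x r \<subseteq> U \<and> (\<forall>y\<in>ball x r. s * ((f y - f x) * (y - x)) \<ge> 0)}"
    using lU ballU by blast
qed

lemma deriv_zero_if_const_right:
  fixes f :: "real \<Rightarrow> real"
  assumes der: "(f has_real_derivative D) (at x)" and xy: "x < y"
    and c: "\<And>z. z \<in> {x..y} \<Longrightarrow> f z = f x"
  shows "D = 0"
proof -
  have l: "((\<lambda>h. (f (x + h) - f x) / h) \<longlongrightarrow> D) (at 0)"
    using der by (simp add: DERIV_def)
  have l1: "((\<lambda>h. (f (x + h) - f x) / h) \<longlongrightarrow> D) (at_right 0)"
    by (rule tendsto_mono[OF at_le l]) simp
  have "eventually (\<lambda>h. (f (x + h) - f x) / h = 0) (at_right (0::real))"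
  proof -
    have "eventually (\<lambda>h. h \<in> {0<..<y - x}) (at_right (0::real))"
      using xy by (intro eventually_at_right_real) simp
    then show ?thesis
    proof eventually_elim
      case (elim h)
      then have "f (x + h) = f x" by (intro c) auto
      then show ?case by simp
    qed
  qed
  then have l2: "((\<lambda>h. (f (x + h) - f x) / h) \<longlongrightarrow> 0) (at_right 0)"
    by (rule tendsto_eventually)
  show "D = 0" using tendsto_unique[OF _ l1 l2] by simp
qed

lemma inj_piece:
  fixes f f' :: "real \<Rightarrow> real"
  assumes der: "\<And>x. x \<in> U \<Longrightarrow> (f has_real_derivative f' x) (at x)"
    and s: "s \<noteq> 0"
    and E: "E \<subseteq> {x \<in> U. ball x r \<subseteq> U \<and> (\<forall>y\<in>ball x r. s * ((f y - f x) * (y - x)) \<ge> 0)}"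
    and small: "\<And>x y. x \<in> E \<Longrightarrow> y \<in> E \<Longrightarrow> \<bar>x - y\<bar> < r"
    and nz: "\<And>x. x \<in> E \<Longrightarrow> f' x \<noteq> 0"
  shows "inj_on f E"
proof -
  have main: "False" if xy: "x < y" "x \<in> E" "y \<in> E" "f x = f y" for x y
  proof -
    have c: "f z = f x" if z: "z \<in> {x..y}" for z
    proof -
      consider "z = x" | "z = y" | "x < z \<and> z < y" using z by fastforce
      then show ?thesis
      proof cases
        case 3
        have "\<bar>z - x\<bar> < r" "\<bar>z - y\<bar> < r" using small[OF xy(2) xy(3)] 3 by auto
        then have "z \<in> ball x r" "z \<in> ball y r" by (auto simp: dist_real_def abs_minus_commute)
        then have h1: "s * ((f z - f x) * (z - x)) \<ge> 0" and h2: "s * ((f z - f y) * (z - y)) \<ge> 0"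
          using E xy(2,3) by blast+
        have a1: "s * (f z - f x) \<ge> 0"
          using h1 3 by (simp add: mult.assoc[symmetric] zero_le_mult_iff)
        have a2: "s * (f z - f x) \<le> 0"
          using h2 3 xy(4) by (simp add: mult.assoc[symmetric] zero_le_mult_iff)
        have "s * (f z - f x) = 0" using a1 a2 by linarith
        then show ?thesis using s by simp
      qed (use xy in auto)
    qed
    have "f' x = 0"
      by (rule deriv_zero_if_const_right[OF der xy(1) c]) (use E xy in auto)
    then show False using nz xy by blast
  qed
  show ?thesis
    unfolding inj_on_def
  proof (intro ballI impI)
    fix x y assume "x \<in> E" "y \<in> E" "f x = f y"
    then show "x = y" using main[of x y] main[of y x] by (metis linorder_neq_iff)
  qed
qed

lemma cover_point:
  fixes f f' :: "real \<Rightarrow> real"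
  assumes U: "open U" and der: "(f has_real_derivative f' x) (at x)" and xU: "x \<in> U"
    and nz: "f' x \<noteq> 0"
  shows "\<exists>n. x \<in> {z \<in> U. ball z (1 / real (Suc n)) \<subseteq> U \<and>
      (\<forall>y\<in>ball z (1 / real (Suc n)). sgn (f' x) * ((f y - f z) * (y - z)) \<ge> 0)}"
proof -
  let ?s = "sgn (f' x)"
  have l: "((\<lambda>h. (f (x + h) - f x) / h) \<longlongrightarrow> f' x) (at 0)"
    using der by (simp add: DERIV_def)
  then have "((\<lambda>h. ?s * ((f (x + h) - f x) / h)) \<longlongrightarrow> ?s * f' x) (at 0)"
    by (intro tendsto_intros)
  moreover have "?s * f' x > 0" using nz by (simp add: sgn_real_def)
  ultimately have "eventually (\<lambda>h. ?s * ((f (x + h) - f x) / h) > 0) (at 0)"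
    by (rule order_tendstoD)
  then obtain d where d: "d > 0" and dh: "\<And>h. h \<noteq> 0 \<Longrightarrow> dist h 0 < d \<Longrightarrow> ?s * ((f (x + h) - f x) / h) > 0"
    unfolding eventually_at by blast
  obtain e where e: "e > 0" "ball x e \<subseteq> U" using U xU open_contains_ball by blast
  obtain n where n: "1 / real (Suc n) < min d e"
    using d e by (metis min_less_iff_conj nat_approx_posE)
  have "ball x (1 / real (Suc n)) \<subseteq> U" using e n by (auto simp: ball_def)
  moreover have "?s * ((f y - f x) * (y - x)) \<ge> 0" if y: "y \<in> ball x (1 / real (Suc n))" for y
  proof (cases "y = x")
    case False
    have "dist (y - x) 0 < d" using y n by (simp add: dist_real_def abs_minus_commute)
    then have q: "?s * ((f (x + (y - x)) - f x) / (y - x)) > 0" using False by (intro dh) auto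
    have "?s * ((f y - f x) * (y - x)) = (?s * ((f (x + (y - x)) - f x) / (y - x))) * (y - x)^2"
      using False by (simp add: field_simps power2_eq_square)
    also have "\<dots> \<ge> 0" by (rule mult_nonneg_nonneg[OF less_imp_le[OF q] zero_le_power2])
    finally show ?thesis .
  qed simp
  ultimately show ?thesis using xU by blast
qed

lemma banach_indicatrix:
  fixes f f' :: "real \<Rightarrow> real"
  assumes U: "open U" and der: "\<And>x. x \<in> U \<Longrightarrow> (f has_real_derivative f' x) (at x)"
  shows "\<exists>s \<in> borel_measurable lborel.
           (AE t in lborel. emeasure (count_space UNIV) {x \<in> U. f x = t} = s t) \<and>
           (\<integral>\<^sup>+ t. s t \<partial>lborel) = (\<integral>\<^sup>+ x. ennreal \<bar>f' x\<bar> * indicator U x \<partial>lborel)"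
proof -
  have contf: "continuous_on U f"
    using der by (meson DERIV_isCont continuous_at_imp_continuous_on)
  have fm: "(\<lambda>x. indicator U x * f' x) \<in> borel_measurable borel"
    by (rule deriv_indicator_measurable[OF U der])
  define g where "g x = indicator U x * f' x" for x
  have gm: "g \<in> borel_measurable borel" using fm by (simp add: g_def[abs_def])
  define r where "r n = 1 / real (Suc n)" for n
  have rpos: "r n > 0" for n by (simp add: r_def)
  define MS where "MS s n = {x \<in> U. ball x (r n) \<subseteq> U \<and> (\<forall>y\<in>ball x (r n). s * ((f y - f x) * (y - x)) \<ge> 0)}" for s :: real and n
  define piece where "piece = (\<lambda>(b::bool, n::nat, j::int, m::nat).
      MS (if b then 1 else -1) n \<inter> {real_of_int j * (r n / 2) ..< (real_of_int j + 1) * (r n / 2)}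
        \<inter> {x. g x \<noteq> 0 \<and> \<bar>g x\<bar> \<le> real m})"
  define A where "A k = piece (from_nat k)" for k
  define D where "D = disjointed A"
  define W where "W = {x \<in> U. f' x \<noteq> 0}"
  have MSclosed: "closed (MS s n)" for s n
    unfolding MS_def by (rule closed_monoset[OF U contf rpos])
  have Gset: "{x. g x \<noteq> 0 \<and> \<bar>g x\<bar> \<le> real m} \<in> sets borel" for m
    using gm by measurable
  have piece_borel: "piece p \<in> sets borel" for p
  proof -
    obtain b n j m where p: "p = (b, n, j, m)" by (cases p) auto
    show ?thesis unfolding p piece_def
      using MSclosed Gset by (auto intro!: sets.Int borel_closed)
  qed
  have A_borel: "range A \<subseteq> sets borel" unfolding A_def by (intro image_subsetI piece_borel)
  have D_borel: "range D \<subseteq> sets borel"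
    unfolding D_def by (rule sets.range_disjointed_sets[OF A_borel])
  have D_sub: "D k \<subseteq> A k" for k unfolding D_def by (rule disjointed_subset)
  have D_disj: "disjoint_family D" unfolding D_def by (rule disjoint_family_disjointed)
  have D_Un: "(\<Union>k. D k) = (\<Union>k. A k)" unfolding D_def by (rule UN_disjointed_eq)
  have piece_props: "piece p \<subseteq> W \<and> inj_on f (piece p) \<and> bounded (piece p) \<and>
       (\<exists>B. \<forall>x\<in>piece p. \<bar>f' x\<bar> \<le> B)" for p
  proof -
    obtain b n j m where p: "p = (b, n, j, m)" by (cases p) auto
    let ?s = "if b then 1 else -1 :: real"
    let ?I = "{real_of_int j * (r n / 2) ..< (real_of_int j + 1) * (r n / 2)}"
    have pp: "piece p = MS ?s n \<inter> ?I \<inter> {x. g x \<noteq> 0 \<and> \<bar>g x\<bar> \<le> real m}"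
      by (simp add: p piece_def)
    have sub: "piece p \<subseteq> W"
      unfolding pp W_def MS_def g_def by (auto simp: indicator_def)
    have inj: "inj_on f (piece p)"
    proof (rule inj_piece[OF der])
      show "?s \<noteq> 0" by simp
      show "piece p \<subseteq> {x \<in> U. ball x (r n) \<subseteq> U \<and> (\<forall>y\<in>ball x (r n). ?s * ((f y - f x) * (y - x)) \<ge> 0)}"
        unfolding pp MS_def by blast
      show "\<bar>x - y\<bar> < r n" if "x \<in> piece p" "y \<in> piece p" for x y
      proof -
        have "x \<in> ?I" "y \<in> ?I" using that unfolding pp by auto
        then show ?thesis using rpos[of n] by (auto simp: algebra_simps abs_if)
      qed
      show "f' x \<noteq> 0" if "x \<in> piece p" for x using sub that by (auto simp: W_def)
    qed
    have bd: "bounded (piece p)"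
      by (rule bounded_subset[of ?I]) (auto simp: pp)
    have "\<forall>x\<in>piece p. \<bar>f' x\<bar> \<le> real m"
      unfolding pp g_def by (auto simp: indicator_def split: if_splits)
    then show ?thesis using sub inj bd by blast
  qed
  have W_cover: "W \<subseteq> (\<Union>k. A k)"
  proof
    fix x assume x: "x \<in> W"
    then have xU: "x \<in> U" and nz: "f' x \<noteq> 0" by (auto simp: W_def)
    obtain n where n: "x \<in> MS (sgn (f' x)) n"
      using cover_point[of U f f' x, OF U der[OF xU] xU nz] unfolding MS_def r_def by blast
    define b where "b = (f' x > 0)"
    have sb: "sgn (f' x) = (if b then 1 else -1)" using nz by (auto simp: b_def sgn_real_def)
    define j where "j = \<lfloor>x / (r n / 2)\<rfloor>"
    have xI: "x \<in> {real_of_int j * (r n / 2) ..< (real_of_int j + 1) * (r n / 2)}"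
    proof -
      have h: "r n / 2 > 0" using rpos[of n] by simp
      have h1: "real_of_int j \<le> x / (r n / 2)" unfolding j_def by (rule of_int_floor_le)
      have h2: "x / (r n / 2) < real_of_int j + 1" unfolding j_def by (rule real_of_int_floor_add_one_gt)
      have "real_of_int j * (r n / 2) \<le> x" using h1 h by (simp only: pos_le_divide_eq)
      moreover have "x < (real_of_int j + 1) * (r n / 2)" using h2 h by (simp only: pos_divide_less_eq)
      ultimately show ?thesis by simp
    qed
    define m where "m = nat \<lceil>\<bar>f' x\<bar>\<rceil>"
    have gx: "g x \<noteq> 0 \<and> \<bar>g x\<bar> \<le> real m"
    proof -
      have "\<bar>f' x\<bar> \<le> real m" unfolding m_def by (rule real_nat_ceiling_ge)
      then show ?thesis using xU nz by (simp add: g_def)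
    qed
    have "x \<in> piece (b, n, j, m)"
      using n xI gx sb by (simp add: piece_def)
    then have "x \<in> A (to_nat (b, n, j, m))" by (simp add: A_def)
    then show "x \<in> (\<Union>k. A k)" by blast
  qed
  have A_sub: "A k \<subseteq> W" for k using conjunct1[OF piece_props[of "from_nat k"]] by (simp add: A_def)
  have "(\<Union>k. A k) = W" by (intro equalityI W_cover UN_least A_sub)
  then have UnD: "(\<Union>k. D k) = W" using D_Un by simp
  have WU: "W \<subseteq> U" unfolding W_def by blast
  have DU: "D k \<subseteq> U" for k using D_sub[of k] A_sub[of k] WU by blast
  have Aprops: "inj_on f (A k) \<and> bounded (A k) \<and> (\<exists>B. \<forall>x\<in>A k. \<bar>f' x\<bar> \<le> B)" for k
    using conjunct2[OF piece_props[of "from_nat k"]] by (simp add: A_def)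
  have Dcov: "f ` D k \<in> sets lebesgue \<and>
         emeasure lebesgue (f ` D k) = (\<integral>\<^sup>+ x. ennreal \<bar>f' x\<bar> * indicator (D k) x \<partial>lborel)" for k
  proof -
    obtain B where B: "\<forall>x\<in>A k. \<bar>f' x\<bar> \<le> B" using Aprops[of k] by blast
    have Ainj: "inj_on f (A k)" and Abd: "bounded (A k)" using Aprops[of k] by blast+
    show ?thesis
    proof (rule cov_piece)
      show "D k \<in> sets borel" using D_borel by blast
      show "bounded (D k)" using Abd D_sub by (rule bounded_subset)
      show "(f has_real_derivative f' x) (at x within D k)" if "x \<in> D k" for x
        using der[of x] DU[of k] that by (blast intro: has_field_derivative_at_within)
      show "inj_on f (D k)" using Ainj D_sub by (rule inj_on_subset)
      show "\<bar>f' x\<bar> \<le> B" if "x \<in> D k" for x using B D_sub that by blast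
      have Dk: "D k \<in> sets borel" using D_borel by blast
      have "(\<lambda>x. indicator (D k) x * g x) \<in> borel_measurable borel"
        by (intro borel_measurable_times borel_measurable_indicator Dk gm)
      moreover have "(\<lambda>x. indicator (D k) x * g x) = (\<lambda>x. indicator (D k) x * f' x)"
        using DU[of k] by (intro ext) (auto simp: g_def indicator_def)
      ultimately show "(\<lambda>x. indicator (D k) x * f' x) \<in> borel_measurable borel" by simp
    qed
  qed
  define Z where "Z = {x \<in> U. f' x = 0}"
  have negZ: "negligible (f ` Z)"
  proof (rule sard_1d)
    fix x assume "x \<in> Z"
    then have "x \<in> U" "f' x = 0" by (auto simp: Z_def)
    then show "(f has_real_derivative 0) (at x within Z)"
      using der[of x] by (metis has_field_derivative_at_within)
  qed
  define s0 where "s0 t = (\<Sum>k. indicator (f ` D k) t :: ennreal)" for t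
  have count: "emeasure (count_space UNIV) {x \<in> U. f x = t} = s0 t" if t: "t \<notin> f ` Z" for t
  proof -
    have "{x \<in> U. f x = t} = (\<Union>k. D k \<inter> {x. f x = t})"
    proof -
      have "{x \<in> U. f x = t} = {x \<in> W. f x = t}" using t by (auto simp: W_def Z_def)
      then show ?thesis using UnD by blast
    qed
    then have "emeasure (count_space UNIV) {x \<in> U. f x = t} =
        (\<Sum>k. emeasure (count_space UNIV) (D k \<inter> {x. f x = t}))"
      by (simp add: suminf_emeasure disjoint_family_subset[OF D_disj] )
    also have "\<dots> = s0 t"
      unfolding s0_def
    proof (rule suminf_cong)
      fix k
      show "emeasure (count_space UNIV) (D k \<inter> {x. f x = t}) = indicator (f ` D k) t"
      proof (cases "t \<in> f ` D k")
        case True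
        then obtain a where a: "a \<in> D k" "f a = t" by blast
        have inj: "inj_on f (D k)" using Aprops[of k] D_sub[of k] by (meson inj_on_subset)
        have "D k \<inter> {x. f x = t} = {a}" using a inj by (auto simp: inj_on_def)
        then show ?thesis using True by simp
      next
        case False
        then have "D k \<inter> {x. f x = t} = {}" by auto
        then show ?thesis using False by simp
      qed
    qed
    finally show ?thesis .
  qed
  have fDl[measurable]: "f ` D k \<in> sets lebesgue" for k using Dcov by blast
  have s0m: "s0 \<in> borel_measurable lebesgue"
    unfolding s0_def by measurable
  have AE0: "AE t in lebesgue. emeasure (count_space UNIV) {x \<in> U. f x = t} = s0 t"
  proof -
    have "f ` Z \<in> null_sets lebesgue" using negZ by (simp add: negligible_iff_null_sets)
    from AE_not_in[OF this] show ?thesis by eventually_elim (rule count)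
  qed
  have int0: "(\<integral>\<^sup>+ t. s0 t \<partial>lebesgue) = (\<integral>\<^sup>+ x. ennreal \<bar>f' x\<bar> * indicator U x \<partial>lborel)"
  proof -
    have "(\<integral>\<^sup>+ t. s0 t \<partial>lebesgue) = (\<Sum>k. \<integral>\<^sup>+ t. indicator (f ` D k) t \<partial>lebesgue)"
      unfolding s0_def by (intro nn_integral_suminf) measurable
    also have "\<dots> = (\<Sum>k. emeasure lebesgue (f ` D k))"
      using Dcov by simp
    also have "\<dots> = (\<Sum>k. \<integral>\<^sup>+ x. ennreal \<bar>f' x\<bar> * indicator (D k) x \<partial>lborel)"
      using Dcov by simp
    also have "\<dots> = (\<integral>\<^sup>+ x. (\<Sum>k. ennreal \<bar>f' x\<bar> * indicator (D k) x) \<partial>lborel)"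
    proof (rule nn_integral_suminf[symmetric])
      fix k
      have "(\<lambda>x. ennreal \<bar>indicator (D k) x * g x\<bar>) \<in> borel_measurable lborel"
        using gm D_borel by measurable
      moreover have "(\<lambda>x. ennreal \<bar>indicator (D k) x * g x\<bar>) = (\<lambda>x. ennreal \<bar>f' x\<bar> * indicator (D k) x)"
        using DU[of k] by (intro ext) (auto simp: g_def indicator_def)
      ultimately show "(\<lambda>x. ennreal \<bar>f' x\<bar> * indicator (D k) x) \<in> borel_measurable lborel" by simp
    qed
    also have "\<dots> = (\<integral>\<^sup>+ x. ennreal \<bar>f' x\<bar> * indicator U x \<partial>lborel)"
    proof (rule nn_integral_cong)
      fix x
      have "(\<Sum>k. ennreal \<bar>f' x\<bar> * indicator (D k) x) = ennreal \<bar>f' x\<bar> * indicator W x"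
        using suminf_indicator[OF D_disj, of x] UnD by simp
      also have "\<dots> = ennreal \<bar>f' x\<bar> * indicator U x"
        by (auto simp: W_def indicator_def)
      finally show "(\<Sum>k. ennreal \<bar>f' x\<bar> * indicator (D k) x) = ennreal \<bar>f' x\<bar> * indicator U x" .
    qed
    finally show ?thesis .
  qed
  obtain s where sm: "s \<in> borel_measurable lborel" and AEs: "AE t in lborel. s0 t = s t"
    using completion_ex_borel_measurable[OF s0m] by blast
  show ?thesis
  proof (intro bexI[OF _ sm] conjI)
    have "AE t in lborel. emeasure (count_space UNIV) {x \<in> U. f x = t} = s0 t"
      using AE0 by (simp add: AE_completion_iff)
    then show "AE t in lborel. emeasure (count_space UNIV) {x \<in> U. f x = t} = s t"
      using AEs by eventually_elim simp
    have "(\<integral>\<^sup>+ t. s t \<partial>lborel) = (\<integral>\<^sup>+ t. s0 t \<partial>lborel)"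
      using AEs by (intro nn_integral_cong_AE) (auto elim!: eventually_mono)
    also have "\<dots> = (\<integral>\<^sup>+ t. s0 t \<partial>lebesgue)" by (simp add: nn_integral_completion)
    finally show "(\<integral>\<^sup>+ t. s t \<partial>lborel) = (\<integral>\<^sup>+ x. ennreal \<bar>f' x\<bar> * indicator U x \<partial>lborel)"
      using int0 by simp
  qed
qed

lemma tangent_angle_range: "0 \<le> tangent_angle v \<and> tangent_angle v < 2 * pi"
  using Arg_bounded[of v] by (auto simp: tangent_angle_def)

lemma tangent_angle_one: "tangent_angle 1 = 0"
  by (simp add: tangent_angle_def)

lemma tangent_angle_Ln:
  assumes "Im v \<noteq> 0 \<or> Re v < 0"
  shows "tangent_angle v = pi + Im (Ln (- v))"
proof -
  have v0: "v \<noteq> 0" using assms by auto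
  have a0: "Arg v \<noteq> 0"
    using assms by (auto simp: Arg_eq_0 complex_is_Real_iff)
  have "Im (Ln (- v)) = Arg (- v)" using v0 by (simp add: Arg_eq_Im_Ln)
  also have "\<dots> = (if Arg v \<le> 0 then Arg v + pi else Arg v - pi)" using v0 by (rule Arg_minus)
  finally show ?thesis using a0 by (auto simp: tangent_angle_def)
qed

lemma unit_not_OP:
  assumes "cmod v = 1" "\<not> (Im v \<noteq> 0 \<or> Re v < 0)"
  shows "v = 1"
proof -
  have "Im v = 0" "Re v \<ge> 0" using assms(2) by auto
  moreover have "cmod v = \<bar>Re v\<bar>" using \<open>Im v = 0\<close> by (simp add: cmod_def)
  ultimately have "Re v = 1" using assms(1) by simp
  then show ?thesis using \<open>Im v = 0\<close> by (simp add: complex_eq_iff)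
qed

lemma countable_isolated:
  fixes X :: "real set"
  shows "countable {x \<in> X. \<not> x islimpt X}"
proof -
  define F where "F = (\<lambda>(p::real, q::real). THE x. x \<in> X \<and> p < x \<and> x < q)"
  have "{x \<in> X. \<not> x islimpt X} \<subseteq> F ` (\<rat> \<times> \<rat>)"
  proof
    fix x assume x: "x \<in> {x \<in> X. \<not> x islimpt X}"
    then obtain T where T: "open T" "x \<in> T" "\<And>y. y \<in> X \<Longrightarrow> y \<in> T \<Longrightarrow> y = x"
      unfolding islimpt_def by auto
    obtain e where e: "e > 0" "ball x e \<subseteq> T" using T open_contains_ball by blast
    obtain p where p: "p \<in> \<rat>" "x - e < p" "p < x" using Rats_dense_in_real[of "x - e" x] e by auto
    obtain q where q: "q \<in> \<rat>" "x < q" "q < x + e" using Rats_dense_in_real[of x "x + e"] e by auto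
    have uniq: "y = x" if "y \<in> X" "p < y" "y < q" for y
    proof (rule T(3)[OF that(1)])
      show "y \<in> T" using e that p q by (intro subsetD[OF e(2)]) (auto simp: dist_real_def)
    qed
    have "F (p, q) = x"
      unfolding F_def using x p q uniq by (auto intro!: the_equality)
    then show "x \<in> F ` (\<rat> \<times> \<rat>)" using p q by force
  qed
  moreover have "countable (F ` (\<rat> \<times> \<rat>))" by (intro countable_image countable_SIGMA countable_rat)
  ultimately show ?thesis by (rule countable_subset)
qed

lemma h_deriv:
  fixes G G' :: "real \<Rightarrow> complex"
  assumes der: "(G has_vector_derivative G' y) (at y)" and op: "Im (G y) \<noteq> 0 \<or> Re (G y) < 0"
    and n1: "cmod (G y) = 1"
  shows "((\<lambda>z. pi + Im (Ln (- G z))) has_real_derivative Im (cnj (G y) * G' y)) (at y)"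
proof -
  have d1: "((\<lambda>z. - G z) has_vector_derivative - G' y) (at y)"
    using der by (rule derivative_intros)
  have nr: "- G y \<notin> \<real>\<^sub>\<le>\<^sub>0" using op by (auto simp: complex_nonpos_Reals_iff)
  have "((Ln \<circ> (\<lambda>z. - G z)) has_vector_derivative (- G' y * inverse (- G y))) (at y)"
    by (rule field_vector_diff_chain_at[OF d1 has_field_derivative_Ln[OF nr]])
  then have "((\<lambda>z. Ln (- G z)) has_derivative (\<lambda>t. t *\<^sub>R (- G' y * inverse (- G y)))) (at y)"
    by (simp add: has_vector_derivative_def o_def)
  then have "((\<lambda>z. Im (Ln (- G z))) has_derivative (\<lambda>t. Im (t *\<^sub>R (- G' y * inverse (- G y))))) (at y)"
    by (rule has_derivative_Im)
  moreover have "(\<lambda>t. Im (t *\<^sub>R (- G' y * inverse (- G y)))) = (*) (Im (cnj (G y) * G' y))"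
  proof -
    have "G y * cnj (G y) = 1" using complex_norm_square[of "G y"] n1 by simp
    then have "inverse (G y) = cnj (G y)" by (rule inverse_unique)
    then have eq: "- G' y * inverse (- G y) = cnj (G y) * G' y"
      by (simp only: inverse_minus_eq mult_minus_left mult_minus_right minus_minus mult.commute)
    have gen: "(\<lambda>t. Im (t *\<^sub>R c)) = (*) (Im c)" for c :: complex by (simp add: fun_eq_iff)
    show ?thesis unfolding eq by (rule gen)
  qed
  ultimately have "((\<lambda>z. Im (Ln (- G z))) has_real_derivative Im (cnj (G y) * G' y)) (at y)"
    by (simp add: has_field_derivative_def)
  from DERIV_add[OF DERIV_const[of pi] this] show ?thesis by simp
qed

theorem lemma6p2:
  fixes g g' g'' :: "real \<Rightarrow> complex" and L :: real
  assumes "0 < L"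
    and "\<forall>t\<in>{0..L}. (g has_vector_derivative g' t) (at t within {0..L})"
    and "\<forall>t\<in>{0..L}. (g' has_vector_derivative g'' t) (at t within {0..L})"
    and "\<forall>t\<in>{0..L}. norm (g' t) = 1"
    and "\<exists>I :: (real \<times> real) set. countable I \<and>
           {0..L} - (\<Union>(a, b)\<in>I. {a<..<b}) \<in> null_sets lborel \<and>
           (\<forall>(a, b)\<in>I. \<forall>y\<in>{a<..<b} \<inter> {0..L}. \<not> inflection_point (signed_curv g' g'') L y)"
  shows "(\<integral>\<^sup>+ \<theta>. emeasure (count_space UNIV) (marked (\<lambda>y. tangent_angle (g' y)) L \<theta>)
            \<partial>uniform_measure lborel {0..<2 * pi})
         = (\<integral>\<^sup>+ y \<in> {0..L}. ennreal \<bar>signed_curv g' g'' y\<bar> \<partial>lborel) / ennreal (2 * pi)"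
proof -
  note L0 = assms(1) and dg' = assms(3) and n1 = assms(4)
  define k where "k = signed_curv g' g''"
  define h where "h = (\<lambda>y. tangent_angle (g' y))"
  define OP where "OP = {z::complex. Im z \<noteq> 0 \<or> Re z < 0}"
  define U where "U = {0<..<L} \<inter> g' -` OP"
  have contg': "continuous_on {0..L} g'"
    using dg' by (meson continuous_on_eq_continuous_within has_vector_derivative_continuous)
  have openOP: "open OP"
    unfolding OP_def by (intro open_Collect_disj open_Collect_neq open_Collect_less continuous_intros)
  have openU: "open U"
    unfolding U_def
    by (rule continuous_open_preimage[OF continuous_on_subset[OF contg'] open_greaterThanLessThan openOP]) auto
  have UL: "U \<subseteq> {0..L}" by (auto simp: U_def)
  have dg'_at: "(g' has_vector_derivative g'' y) (at y)" if "y \<in> {0<..<L}" for y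
  proof -
    have "(g' has_vector_derivative g'' y) (at y within {0..L})" using dg' that by auto
    moreover have "at y within {0..L} = at y" using that by (intro at_within_Icc_at) auto
    ultimately show ?thesis by simp
  qed
  have derU: "(h has_real_derivative k y) (at y)" if y: "y \<in> U" for y
  proof -
    have y1: "y \<in> {0<..<L}" and y2: "g' y \<in> OP" using y by (auto simp: U_def)
    have "((\<lambda>z. pi + Im (Ln (- g' z))) has_real_derivative Im (cnj (g' y) * g'' y)) (at y)"
      by (rule h_deriv[of g' g'' y, OF dg'_at[OF y1]]) (use y2 n1 y1 in \<open>auto simp: OP_def\<close>)
    then have "((\<lambda>z. pi + Im (Ln (- g' z))) has_real_derivative k y) (at y)"
      by (simp add: k_def signed_curv_def)
    then show ?thesis
    proof (rule has_field_derivative_transform_within_open[OF _ openU y])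
      fix z assume "z \<in> U"
      then have "g' z \<in> OP" by (auto simp: U_def)
      then show "pi + Im (Ln (- g' z)) = h z" unfolding h_def
        by (intro tangent_angle_Ln[symmetric]) (auto simp: OP_def)
    qed
  qed
  obtain s where sm: "s \<in> borel_measurable lborel"
    and AEs: "AE t in lborel. emeasure (count_space UNIV) {x \<in> U. h x = t} = s t"
    and ints: "(\<integral>\<^sup>+ t. s t \<partial>lborel) = (\<integral>\<^sup>+ x. ennreal \<bar>k x\<bar> * indicator U x \<partial>lborel)"
    using banach_indicatrix[OF openU derU] by blast
  define Bad where "Bad = {0, h 0, h L} \<union> h ` \<rat>"
  have Bad_null: "Bad \<in> null_sets lborel"
    unfolding Bad_def by (intro countable_imp_null_set_lborel countable_Un countable_image countable_rat) auto
  have mk: "marked h L \<theta> = {x \<in> U. h x = \<theta>}" if th: "\<theta> \<notin> Bad" for \<theta>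
  proof
    show "marked h L \<theta> \<subseteq> {x \<in> U. h x = \<theta>}"
    proof
      fix y assume "y \<in> marked h L \<theta>"
      then have y: "y \<in> {0..L}" "h y = \<theta>" by (auto simp: marked_def)
      have "y \<noteq> 0" "y \<noteq> L" using th y by (auto simp: Bad_def)
      then have y1: "y \<in> {0<..<L}" using y by auto
      have "g' y \<in> OP"
      proof (rule ccontr)
        assume "g' y \<notin> OP"
        then have "g' y = 1" using n1 y(1) by (intro unit_not_OP) (auto simp: OP_def)
        then have "h y = 0" by (simp add: h_def tangent_angle_one)
        then show False using th y by (auto simp: Bad_def)
      qed
      then show "y \<in> {x \<in> U. h x = \<theta>}" using y y1 by (auto simp: U_def)
    qed
    show "{x \<in> U. h x = \<theta>} \<subseteq> marked h L \<theta>"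
    proof
      fix y assume y: "y \<in> {x \<in> U. h x = \<theta>}"
      have yL: "y \<in> {0..L}" using y UL by auto
      have "\<exists>\<delta>. 0 < \<delta> \<and> \<delta> < \<epsilon> \<and> (y - \<delta> \<notin> {0..L} \<or> h (y - \<delta>) \<noteq> \<theta>)" if e: "\<epsilon> > 0" for \<epsilon>
      proof (rule ccontr)
        assume "\<not> ?thesis"
        then have c: "\<And>\<delta>. 0 < \<delta> \<Longrightarrow> \<delta> < \<epsilon> \<Longrightarrow> h (y - \<delta>) = \<theta>" by blast
        obtain q where q: "q \<in> \<rat>" "y - \<epsilon> < q" "q < y" using Rats_dense_in_real[of "y - \<epsilon>" y] e by auto
        have "h (y - (y - q)) = \<theta>" using q by (intro c) auto
        then have "\<theta> \<in> h ` \<rat>" using q by force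
        then show False using th by (auto simp: Bad_def)
      qed
      then show "y \<in> marked h L \<theta>" using yL y by (auto simp: marked_def)
    qed
  qed
  have AE1: "AE \<theta> in lborel. \<theta> \<in> {0..<2 * pi} \<longrightarrow>
      emeasure (count_space UNIV) (marked h L \<theta>) = s \<theta>"
    using AE_not_in[OF Bad_null] AEs by eventually_elim (simp add: mk)
  have AE2: "AE \<theta> in lborel. s \<theta> * indicator {0..<2 * pi} \<theta> = s \<theta>"
    using AEs
  proof eventually_elim
    case (elim \<theta>)
    show ?case
    proof (cases "\<theta> \<in> {0..<2 * pi}")
      case False
      then have e: "{x \<in> U. h x = \<theta>} = {}" using tangent_angle_range by (auto simp: h_def)
      have "s \<theta> = emeasure (count_space UNIV) {x \<in> U. h x = \<theta>}" using elim by simp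
      also have "\<dots> = 0" unfolding e by simp
      finally have "s \<theta> = 0" .
      then show ?thesis by simp
    qed simp
  qed
  \<comment> \<open>the curvature vanishes on the rest of the parameter interval, up to a null set\<close>
  define Z0 where "Z0 = {y \<in> {0<..<L}. g' y \<notin> OP}"
  define Iso where "Iso = {x \<in> Z0. \<not> x islimpt Z0}"
  have Iso_null: "{0, L} \<union> Iso \<in> null_sets lborel"
    unfolding Iso_def by (intro countable_imp_null_set_lborel countable_Un countable_isolated) auto
  have kzero: "k y = 0" if y: "y \<in> Z0" "y islimpt Z0" for y
  proof -
    have one: "g' z = 1" if "z \<in> Z0" for z
      using that n1 by (intro unit_not_OP) (auto simp: Z0_def OP_def)
    have y1: "y \<in> {0<..<L}" using y by (auto simp: Z0_def)
    have d1: "(g' has_vector_derivative g'' y) (at y within Z0)"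
      using dg'_at[OF y1] by (rule has_vector_derivative_at_within)
    have d0: "((\<lambda>_. 1) has_vector_derivative 0) (at y within Z0)" by (rule derivative_intros)
    have d2: "(g' has_vector_derivative 0) (at y within Z0)"
      by (rule has_vector_derivative_transform_within[OF d0 zero_less_one y(1)]) (simp add: one)
    have "at y within Z0 \<noteq> bot" using y(2) trivial_limit_within by blast
    then have "g'' y = 0" using vector_derivative_unique_within[OF _ d1 d2] by blast
    then show ?thesis by (simp add: k_def signed_curv_def)
  qed
  have AE3: "AE y in lborel. ennreal \<bar>k y\<bar> * indicator U y = ennreal \<bar>k y\<bar> * indicator {0..L} y"
    using AE_not_in[OF Iso_null]
  proof eventually_elim
    case (elim y)
    show ?case
    proof (cases "y \<in> {0..L} - U")
      case True
      then have "y \<in> Z0" using elim by (auto simp: Z0_def U_def)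
      then have "y islimpt Z0" using elim by (auto simp: Iso_def)
      then have "k y = 0" using kzero \<open>y \<in> Z0\<close> by blast
      then show ?thesis by simp
    next
      case False
      then show ?thesis using UL by (auto simp: indicator_def)
    qed
  qed
  have "(\<integral>\<^sup>+ \<theta>. emeasure (count_space UNIV) (marked h L \<theta>) \<partial>uniform_measure lborel {0..<2 * pi})
      = (\<integral>\<^sup>+ \<theta>. s \<theta> \<partial>uniform_measure lborel {0..<2 * pi})"
    by (intro nn_integral_cong_AE AE_uniform_measureI AE1) simp
  also have "\<dots> = (\<integral>\<^sup>+ \<theta>. s \<theta> * indicator {0..<2 * pi} \<theta> \<partial>lborel) / emeasure lborel {0..<2 * pi}"
    by (rule nn_integral_uniform_measure[OF sm]) simp
  also have "\<dots> = (\<integral>\<^sup>+ \<theta>. s \<theta> \<partial>lborel) / ennreal (2 * pi)"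
    using AE2 by (simp add: nn_integral_cong_AE)
  also have "\<dots> = (\<integral>\<^sup>+ y. ennreal \<bar>k y\<bar> * indicator {0..L} y \<partial>lborel) / ennreal (2 * pi)"
    using AE3 by (simp add: ints nn_integral_cong_AE)
  finally show ?thesis by (simp add: h_def k_def)
qed

end
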